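(* Let $n$ be a positive integer and let $k$ be an even integer with $n/2+1\le k\le n-1$. Then the graph $H_{n,k}$ is uniquely vector colorable.
   Context: For $x,y\in\mathbb{Z}_2^n$, the weight of $x$ is its number of nonzero coordinates and $d(x,y)$ denotes Hamming distance. $H_{n,k}$ is the graph whose vertices are the even-weight elements of $\mathbb{Z}_2^n$, with $x\sim y$ iff $x+y$ has weight exactly $k$ (addition is bitwise XOR). A vector $t$-coloring of a graph $G$ (with $t\ge 2$) is an assignment $i\mapsto p_i$ of unit vectors in some $\mathbb{R}^d$ to the vertices of $G$ such that $\langle p_i,p_j\rangle\le -1/(t-1)$ whenever $i\sim j$. The vector chromatic number $\chi_v(G)$ is the smallest $t\ge 2$ for which a vector $t$-coloring exists; a vector $\chi_v(G)$-coloring is called optimal. $G$ is uniquely vector colorable (UVC) if any two optimal vector colorings $i\mapsto p_i\in\mathbb{R}^d$ and $i\mapsto q_i\in\mathbb{R}^{d'}$ of $G$ have the same Gram matrix, i.e. $\langle p_i,p_j\rangle=\langle q_i,q_j\rangle$ for all vertices $i,j$. *)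

theory Defs
  imports Complex_Main
begin

text \<open>Elements of Z_2^n are represented as boolean lists of length n.\<close>

definition weight :: "bool list \<Rightarrow> nat" where
  "weight x = length (filter id x)"

definition bxor :: "bool list \<Rightarrow> bool list \<Rightarrow> bool list" where
  "bxor x y = map2 (\<noteq>) x y"

definition H_verts :: "nat \<Rightarrow> bool list set" where
  "H_verts n = {x. length x = n \<and> even (weight x)}"

definition H_adj :: "nat \<Rightarrow> bool list \<Rightarrow> bool list \<Rightarrow> bool" where
  "H_adj k x y \<longleftrightarrow> weight (bxor x y) = k"

text \<open>Vectors in R^d are represented as functions nat => real, of which only
  the coordinates 0..d-1 matter.\<close>

definition inner_d :: "nat \<Rightarrow> (nat \<Rightarrow> real) \<Rightarrow> (nat \<Rightarrow> real) \<Rightarrow> real" where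
  "inner_d d u v = (\<Sum>i<d. u i * v i)"

definition vector_coloring ::
  "'v set \<Rightarrow> ('v \<Rightarrow> 'v \<Rightarrow> bool) \<Rightarrow> real \<Rightarrow> nat \<Rightarrow> ('v \<Rightarrow> nat \<Rightarrow> real) \<Rightarrow> bool" where
  "vector_coloring V E t d p \<longleftrightarrow> t \<ge> 2 \<and>
     (\<forall>i\<in>V. inner_d d (p i) (p i) = 1) \<and>
     (\<forall>i\<in>V. \<forall>j\<in>V. E i j \<longrightarrow> inner_d d (p i) (p j) \<le> - 1 / (t - 1))"

definition vector_chromatic_number :: "'v set \<Rightarrow> ('v \<Rightarrow> 'v \<Rightarrow> bool) \<Rightarrow> real" where
  "vector_chromatic_number V E = Inf {t. \<exists>d p. vector_coloring V E t d p}"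

definition optimal_vector_coloring ::
  "'v set \<Rightarrow> ('v \<Rightarrow> 'v \<Rightarrow> bool) \<Rightarrow> nat \<Rightarrow> ('v \<Rightarrow> nat \<Rightarrow> real) \<Rightarrow> bool" where
  "optimal_vector_coloring V E d p \<longleftrightarrow>
     vector_coloring V E (vector_chromatic_number V E) d p"

definition uniquely_vector_colorable :: "'v set \<Rightarrow> ('v \<Rightarrow> 'v \<Rightarrow> bool) \<Rightarrow> bool" where
  "uniquely_vector_colorable V E \<longleftrightarrow>
     (\<forall>d p d' q. optimal_vector_coloring V E d p \<longrightarrow> optimal_vector_coloring V E d' q \<longrightarrow>
        (\<forall>i\<in>V. \<forall>j\<in>V. inner_d d (p i) (p j) = inner_d d' (q i) (q j)))"

end

theory Submission
  imports Defs
begin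


fun Kr :: "nat \<Rightarrow> nat \<Rightarrow> nat \<Rightarrow> int" where
  "Kr n 0 j = 1"
| "Kr 0 (Suc k) j = 0"
| "Kr (Suc n) (Suc k) 0 = Kr n (Suc k) 0 + Kr n k 0"
| "Kr (Suc n) (Suc k) (Suc j) = Kr n (Suc k) j - Kr n k j"

lemma Kr_F: "j \<le> n \<Longrightarrow> Kr (Suc n) (Suc k) j = Kr n (Suc k) j + Kr n k j"
proof (induction n arbitrary: k j)
  case 0
  then show ?case by simp
next
  case (Suc n)
  show ?case
  proof (cases j)
    case 0
    then show ?thesis by simp
  next
    case (Suc j')
    with Suc.prems have j': "j' \<le> n" by simp
    show ?thesis
    proof (cases k)
      case 0
      have "Kr (Suc n) (Suc 0) j' = Kr n (Suc 0) j' + Kr n 0 j'" using Suc.IH[of j' 0] j' by simp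
      then show ?thesis using  \<open>j = Suc j'\<close> 0 by simp
    next
      case (Suc k')
      then show ?thesis using Suc.IH[of j' "Suc k'"] Suc.IH[of j' k'] j' \<open>j = Suc j'\<close> by simp
    qed
  qed
qed

lemma Kr_0: "Kr n k 0 = int (n choose k)"
proof (induction n arbitrary: k)
  case 0
  then show ?case by (cases k) auto
next
  case (Suc n)
  then show ?case by (cases k) auto
qed

lemma Kr_1m: "j \<le> n \<Longrightarrow> Kr n (Suc 0) j = int n - 2 * int j"
proof (induction n arbitrary: j)
  case 0
  then show ?case by simp
next
  case (Suc n)
  then show ?case by (cases j) (auto simp: Kr_0)
qed


definition L :: "nat \<Rightarrow> bool list set" where "L n = {xs. length xs = n}"

lemma finite_L: "finite (L n)"
proof -
  have "L n \<subseteq> {xs. set xs \<subseteq> UNIV \<and> length xs = n}" by (auto simp: L_def)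
  moreover have "finite {xs::bool list. set xs \<subseteq> UNIV \<and> length xs = n}"
    by (rule finite_lists_length_eq) simp
  ultimately show ?thesis by (rule finite_subset)
qed

lemma L_Suc: "L (Suc n) = Cons True ` L n \<union> Cons False ` L n"
proof
  show "L (Suc n) \<subseteq> Cons True ` L n \<union> Cons False ` L n"
  proof
    fix x assume "x \<in> L (Suc n)"
    then obtain b y where "x = b # y" "length y = n" by (cases x) (auto simp: L_def)
    then show "x \<in> Cons True ` L n \<union> Cons False ` L n" by (cases b) (auto simp: L_def)
  qed
qed (auto simp: L_def)

lemma sum_L_Suc: "(\<Sum>x\<in>L (Suc n). f x) = (\<Sum>x\<in>L n. f (True # x)) + (\<Sum>x\<in>L n. f (False # x))"
proof -
  have "(\<Sum>x\<in>L (Suc n). f x) = (\<Sum>x\<in>Cons True ` L n. f x) + (\<Sum>x\<in>Cons False ` L n. f x)"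
    unfolding L_Suc by (rule sum.union_disjoint) (auto simp: finite_L)
  also have "\<dots> = (\<Sum>x\<in>L n. f (True # x)) + (\<Sum>x\<in>L n. f (False # x))"
    by (simp add: sum.reindex)
  finally show ?thesis .
qed

lemma L_0: "L 0 = {[]}" by (auto simp: L_def)

fun chi :: "bool list \<Rightarrow> bool list \<Rightarrow> real" where
  "chi (a # s) (b # x) = (if a \<and> b then -1 else 1) * chi s x"
| "chi _ _ = 1"

lemma weight_Nil[simp]: "weight [] = 0" by (simp add: weight_def)
lemma weight_Cons[simp]: "weight (b # x) = (if b then 1 else 0) + weight x" by (simp add: weight_def)
lemma bxor_Cons[simp]: "bxor (a # x) (b # y) = (a \<noteq> b) # bxor x y" by (simp add: bxor_def)
lemma bxor_Nil[simp]: "bxor [] y = []" "bxor x [] = []" by (simp_all add: bxor_def)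
lemma length_bxor[simp]: "length (bxor x y) = min (length x) (length y)" by (simp add: bxor_def)
lemma weight_le: "weight x \<le> length x" by (simp add: weight_def)

lemma chi_comm: "chi s x = chi x s"
  by (induction s x rule: chi.induct) auto

lemma chi_mult: "length x = length s \<Longrightarrow> length y = length s \<Longrightarrow> chi s x * chi s y = chi s (bxor x y)"
proof (induction s arbitrary: x y)
  case Nil then show ?case by simp
next
  case (Cons a s)
  then obtain b x' c y' where "x = b # x'" "y = c # y'" by (cases x; cases y) auto
  with Cons show ?case by auto
qed

lemma chi_pm: "chi s x = 1 \<or> chi s x = -1"
  by (induction s x rule: chi.induct) auto

lemma chi_sq: "chi s x * chi s x = 1"
  using chi_pm[of s x] by auto

lemma orth: "u \<in> L n \<Longrightarrow> (\<Sum>s\<in>L n. chi s u) = (if u = replicate n False then 2 ^ n else 0)"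
proof (induction n arbitrary: u)
  case 0 then show ?case by (simp add: L_0 L_def)
next
  case (Suc n)
  then obtain b u' where u: "u = b # u'" "u' \<in> L n" by (cases u) (auto simp: L_def)
  show ?case using Suc.IH[OF u(2)] by (cases b) (simp_all add: sum_L_Suc u sum_negf)
qed

lemma bxor_zero_iff: "length x = length y \<Longrightarrow> (bxor x y = replicate (length x) False) = (x = y)"
  by (induction x y rule: list_induct2) auto

lemma bxor_cancel: "length x = length z \<Longrightarrow> bxor x (bxor x z) = z"
  by (induction x z rule: list_induct2) auto

lemma bxor_comm: "bxor x y = bxor y x"
  unfolding bxor_def by (induction x y rule: list_induct2') auto

lemma even_weight_bxor: "length x = length y \<Longrightarrow> even (weight (bxor x y)) = (even (weight x) = even (weight y))"
  by (induction x y rule: list_induct2) auto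

definition KS :: "bool list \<Rightarrow> nat \<Rightarrow> real" where
  "KS s k = (\<Sum>z\<in>L (length s). if weight z = k then chi s z else 0)"

lemma KS_Nil: "KS [] k = (if k = 0 then 1 else 0)"
  by (simp add: KS_def L_0)

lemma chi_Cons_False[simp]: "chi (a # s) (False # z) = chi s z" by simp

lemma KS_Cons_0: "KS (a # s) 0 = KS s 0"
  unfolding KS_def by (simp add: sum_L_Suc del: chi.simps) (rule sum.cong, auto)

lemma KS_Cons_Suc: "KS (a # s) (Suc k) = KS s (Suc k) + (if a then -1 else 1) * KS s k"
  by (simp add: KS_def sum_L_Suc sum_distrib_left if_distrib cong: if_cong)

lemma KS_0: "KS s 0 = 1"
  by (induction s) (simp_all add: KS_Nil KS_Cons_0)

lemma KS_Kr: "KS s k = of_int (Kr (length s) k (weight s))"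
proof (induction s arbitrary: k)
  case Nil then show ?case by (cases k) (simp_all add: KS_Nil)
next
  case (Cons a s)
  show ?case
  proof (cases k)
    case 0 then show ?thesis by (simp add: KS_0)
  next
    case (Suc k')
    show ?thesis
    proof (cases a)
      case True then show ?thesis using Cons.IH Suc by (simp add: KS_Cons_Suc)
    next
      case False then show ?thesis using Cons.IH Suc weight_le[of s] by (simp add: KS_Cons_Suc Kr_F)
    qed
  qed
qed


lemma chi_not: "length s = length z \<Longrightarrow> chi (map Not s) z = (-1) ^ (weight z) * chi s z"
proof (induction s arbitrary: z)
  case Nil then show ?case by simp
next
  case (Cons a s)
  then obtain b z' where "z = b # z'" by (cases z) auto
  with Cons show ?case by auto
qed

lemma chi_not2: "length s = length z \<Longrightarrow> chi s (map Not z) = (-1) ^ (weight s) * chi s z"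
  using chi_not[of z s] by (simp add: chi_comm)

lemma KS_not: "KS (map Not s) k = (-1) ^ k * KS s k"
  unfolding KS_def by (auto simp: sum_distrib_left L_def chi_not intro!: sum.cong)

lemma weight_not: "weight (map Not z) = length z - weight z"
  by (induction z) (auto simp: Suc_diff_le weight_le)

lemma bij_not: "bij_betw (map Not) (L n) (L n)"
  by (rule bij_betw_byWitness[where f' = "map Not"]) (auto simp: L_def comp_def)

lemma KS_compk:
  assumes "k \<le> length s"
  shows "KS s (length s - k) = (-1) ^ (weight s) * KS s k"
proof -
  let ?n = "length s"
  have "KS s (?n - k) = (\<Sum>z\<in>L ?n. if weight (map Not z) = ?n - k then chi s (map Not z) else 0)"
    unfolding KS_def by (rule sum.reindex_bij_betw[OF bij_not, symmetric])
  also have "\<dots> = (\<Sum>z\<in>L ?n. (-1) ^ (weight s) * (if weight z = k then chi s z else 0))"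
  proof (rule sum.cong)
    fix z assume z: "z \<in> L ?n"
    then have "weight z \<le> ?n" using weight_le[of z] by (simp add: L_def)
    then have "(?n - weight z = ?n - k) = (weight z = k)" using assms by auto
    then show "(if weight (map Not z) = ?n - k then chi s (map Not z) else 0) = (-1) ^ (weight s) * (if weight z = k then chi s z else 0)"
      using z by (simp add: weight_not chi_not2 L_def)
  qed simp
  also have "\<dots> = (-1) ^ (weight s) * KS s k" by (simp add: KS_def sum_distrib_left)
  finally show ?thesis .
qed

definition cl :: "nat \<Rightarrow> nat \<Rightarrow> bool list" where
  "cl n j = replicate j True @ replicate (n - j) False"

lemma weight_append: "weight (x @ y) = weight x + weight y" by (simp add: weight_def)
lemma weight_replicate: "weight (replicate j b) = (if b then j else 0)"
  by (induction j) auto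

lemma cl_props: "j \<le> n \<Longrightarrow> length (cl n j) = n \<and> weight (cl n j) = j"
  by (simp add: cl_def weight_append weight_replicate)

lemma Kr_SJ: "j \<le> n \<Longrightarrow> Kr n k (n - j) = (-1) ^ k * Kr n k j"
proof -
  assume j: "j \<le> n"
  have "of_int (Kr n k (n - j)) = KS (map Not (cl n j)) k"
    using cl_props[OF j] by (simp add: KS_Kr weight_not)
  also have "\<dots> = (-1) ^ k * KS (cl n j) k" by (rule KS_not)
  also have "\<dots> = of_int ((-1) ^ k * Kr n k j)" using cl_props[OF j] by (simp add: KS_Kr)
  finally show ?thesis by (simp only: of_int_eq_iff)
qed

lemma Kr_SK: "k \<le> n \<Longrightarrow> j \<le> n \<Longrightarrow> Kr n (n - k) j = (-1) ^ j * Kr n k j"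
proof -
  assume k: "k \<le> n" and j: "j \<le> n"
  have "of_int (Kr n (n - k) j) = KS (cl n j) (length (cl n j) - k)"
    using cl_props[OF j] by (simp add: KS_Kr)
  also have "\<dots> = (-1) ^ (weight (cl n j)) * KS (cl n j) k" using k cl_props[OF j] by (intro KS_compk) simp
  also have "\<dots> = of_int ((-1) ^ j * Kr n k j)" using cl_props[OF j] by (simp add: KS_Kr)
  finally show ?thesis by (simp only: of_int_eq_iff)
qed


lemma Kr_two: "i \<le> n0 \<Longrightarrow> Kr (Suc (Suc n0)) (Suc (Suc M)) (Suc i) = Kr n0 (Suc (Suc M)) i - Kr n0 M i"
  by (simp add: Kr_F)

lemma Kr_ID: "Kr (Suc (Suc (Suc (2 * M + 2)))) (M + 2) 1 = Kr (2 * M + 3) (M + 1) 1 + Kr (2 * M + 3) M 1"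
proof (cases M)
  case 0
  then show ?thesis by (simp add: numeral_eq_Suc Kr_0)
next
  case (Suc M3)
  have e1: "Kr (Suc (Suc (Suc (2 * M + 2)))) (M + 2) 1 = int (Suc (2*M+2) choose (M + 2)) - int (Suc (2*M+2) choose M)"
    using Kr_two[of 0 "Suc (2*M+2)" M] by (simp add: Kr_0)
  have e2: "Kr (2 * M + 3) (M + 1) 1 = int ((2*M+2) choose (M+1)) - int ((2*M+2) choose M)"
    by (simp add: numeral_eq_Suc Kr_0)
  have e3: "Kr (2 * M + 3) M 1 = int ((2*M+2) choose M) - int ((2*M+2) choose M3)"
    using Suc by (simp add: numeral_eq_Suc Kr_0)
  have s1: "(Suc (2*M+2) choose (M + 2)) = ((2*M+2) choose (M+1)) + ((2*M+2) choose (M+2))"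
    by (simp add: numeral_eq_Suc)
  have s2: "(Suc (2*M+2) choose M) = ((2*M+2) choose M3) + ((2*M+2) choose M)"
    using Suc by simp
  have s3: "((2*M+2) choose (M+2)) = ((2*M+2) choose M)"
    using binomial_symmetric[of "M+2" "2*M+2"] by simp
  show ?thesis using e1 e2 e3 s1 s2 s3 by simp
qed

lemma Kr_P: "2 * m < n \<Longrightarrow> 1 \<le> j \<Longrightarrow> j \<le> n - 1 \<Longrightarrow> \<bar>Kr n m j\<bar> \<le> Kr n m 1"
proof (induction n arbitrary: m j rule: less_induct)
  case (less n)
  show ?case
  proof (cases m)
    case 0 then show ?thesis by simp
  next
    case (Suc m')
    show ?thesis
    proof (cases "n \<ge> 2 * m + 2")
      case True
      then obtain n' where n': "n = Suc n'" by (cases n) auto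
      have h1: "Kr n m 1 = Kr n' m 1 + Kr n' m' 1" using Kr_F[of 1 n' m'] n' Suc True by (simp del: Kr.simps)
      show ?thesis
      proof (cases "j < n'")
        case True
        have "Kr n m j = Kr n' m j + Kr n' m' j" using n' Suc True by (simp add: Kr_F)
        moreover have "\<bar>Kr n' m j\<bar> \<le> Kr n' m 1" using less.IH[of n' m j] less.prems n' True \<open>n \<ge> 2*m+2\<close> by simp
        moreover have "\<bar>Kr n' m' j\<bar> \<le> Kr n' m' 1" using less.IH[of n' m' j] less.prems n' True \<open>n \<ge> 2*m+2\<close> Suc by simp
        ultimately show ?thesis using h1 by (smt (verit) abs_triangle_ineq)
      next
        case False
        then have jn: "j = n'" using less.prems n' by simp
        then obtain j'' where j'': "j = Suc j''" using n' Suc \<open>n \<ge> 2*m+2\<close> by (cases j) auto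
        have "Kr n m j = Kr n' m j'' - Kr n' m' j''" using n' Suc j'' by simp
        moreover have "\<bar>Kr n' m j''\<bar> \<le> Kr n' m 1" using less.IH[of n' m j''] less.prems n' jn j'' \<open>n \<ge> 2*m+2\<close> Suc by simp
        moreover have "\<bar>Kr n' m' j''\<bar> \<le> Kr n' m' 1" using less.IH[of n' m' j''] less.prems n' jn j'' \<open>n \<ge> 2*m+2\<close> Suc by simp
        ultimately show ?thesis using h1 by (smt (verit) abs_triangle_ineq4)
      qed
    next
      case False
      then have nm: "n = 2 * m + 1" using less.prems by simp
      show ?thesis
      proof (cases m')
        case 0
        then have "n = 3" "m = 1" using nm Suc by auto
        then show ?thesis using less.prems Kr_1m[of j 3] Kr_1m[of 1 3] by auto
      next
        case (Suc M)
        have mM: "m = M + 2" using Suc \<open>m = Suc m'\<close> by simp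
        have nM: "n = Suc (Suc (Suc (2 * M + 2)))" using nm mM by simp
        define n0 where "n0 = 2 * M + 3"
        have IH1: "\<bar>Kr n0 (M+1) i\<bar> \<le> Kr n0 (M+1) 1" if "1 \<le> i" "i \<le> n0 - 1" for i
          using less.IH[of n0 "M+1" i] that nM n0_def by simp
        have IH2: "\<bar>Kr n0 M i\<bar> \<le> Kr n0 M 1" if "1 \<le> i" "i \<le> n0 - 1" for i
          using less.IH[of n0 M i] that nM n0_def by simp
        have ID: "Kr n m 1 = Kr n0 (M+1) 1 + Kr n0 M 1" using Kr_ID[of M] nM mM n0_def by simp
        have pos: "Kr n m 1 \<ge> 0" using ID IH1[of 1] IH2[of 1] n0_def by simp
        show ?thesis
        proof (cases "j = n - 1")
          case True
          have "Kr n m (n - 1) = (-1) ^ m * Kr n m 1" using Kr_SJ[of 1 n m] nM by simp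
          then show ?thesis using True pos by (simp add: abs_mult)
        next
          case False
          show ?thesis
          proof (cases "j = 1")
            case True then show ?thesis using pos by simp
          next
            case False
            then obtain i where i: "j = Suc i" "1 \<le> i" "i \<le> n0 - 1"
              using \<open>j \<noteq> n - 1\<close> less.prems nM n0_def by (cases j) auto
            have "Kr n m j = Kr n0 (M+2) i - Kr n0 M i"
              using Kr_two[of i n0 M] i nM mM n0_def by (simp add: numeral_eq_Suc)
            moreover have "Kr n0 (M+2) i = (-1) ^ i * Kr n0 (M+1) i"
              using Kr_SK[of "M+1" n0 i] i n0_def by (simp add: numeral_eq_Suc)
            moreover have "\<bar>(-1) ^ i * Kr n0 (M+1) i\<bar> = \<bar>Kr n0 (M+1) i\<bar>" by (simp add: abs_mult)
            ultimately have "\<bar>Kr n m j\<bar> \<le> \<bar>Kr n0 (M+1) i\<bar> + \<bar>Kr n0 M i\<bar>"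
              by (smt (verit) abs_triangle_ineq4)
            then show ?thesis using IH1[OF i(2,3)] IH2[OF i(2,3)] ID by simp
          qed
        qed
      qed
    qed
  qed
qed


lemma Kr_Q: "2 * m + 2 \<le> n \<Longrightarrow> 1 \<le> m \<Longrightarrow> 2 \<le> j \<Longrightarrow> j \<le> n - 2 \<Longrightarrow> \<bar>Kr n m j\<bar> < Kr n m 1"
proof (induction n arbitrary: m j rule: less_induct)
  case (less n)
  show ?case
  proof (cases "m = 1")
    case True
    then show ?thesis using less.prems Kr_1m[of j n] Kr_1m[of 1 n] by auto
  next
    case False
    then obtain m' where m': "m = Suc m'" "1 \<le> m'" using less.prems by (cases m) auto
    obtain n' where n': "n = Suc n'" using less.prems by (cases n) auto
    have h1: "Kr n m 1 = Kr n' m 1 + Kr n' m' 1" using Kr_F[of 1 n' m'] n' m' less.prems by (simp del: Kr.simps)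
    show ?thesis
    proof (cases "j \<le> n' - 2")
      case True
      have "Kr n m j = Kr n' m j + Kr n' m' j" using n' m' True less.prems by (simp add: Kr_F)
      moreover have "\<bar>Kr n' m j\<bar> \<le> Kr n' m 1" using Kr_P[of m n' j] less.prems n' m' True by simp
      moreover have "\<bar>Kr n' m' j\<bar> < Kr n' m' 1" using less.IH[of n' m' j] less.prems n' m' True by simp
      ultimately show ?thesis using h1 by (smt (verit) abs_triangle_ineq)
    next
      case False
      then obtain j'' where j'': "j = Suc j''" "j'' = n' - 2" "2 \<le> j''" using less.prems n' m' by (cases j) auto
      have "Kr n m j = Kr n' m j'' - Kr n' m' j''" using n' m' j'' by simp
      moreover have "\<bar>Kr n' m j''\<bar> \<le> Kr n' m 1" using Kr_P[of m n' j''] less.prems n' m' j'' by simp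
      moreover have "\<bar>Kr n' m' j''\<bar> < Kr n' m' 1" using less.IH[of n' m' j''] less.prems n' m' j'' by simp
      ultimately show ?thesis using h1 by (smt (verit) abs_triangle_ineq4)
    qed
  qed
qed

lemma Kr_main:
  assumes "even k" "n + 2 \<le> 2 * k" "k \<le> n - 1" "j \<le> n"
  shows "Kr n k 1 \<le> Kr n k j \<and> (j \<noteq> 1 \<and> j \<noteq> n - 1 \<longrightarrow> Kr n k 1 < Kr n k j)"
proof -
  define m where "m = n - k"
  have km: "k = n - m" using assms m_def by simp
  have mle: "m \<le> n" using m_def by simp
  have Q: "\<bar>Kr n m i\<bar> < Kr n m 1" if "2 \<le> i" "i \<le> n - 2" for i
    using Kr_Q[of m n i] that assms m_def by simp
  have "2 \<le> n - 2" using assms by linarith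
  then have pos: "Kr n m 1 > 0" using Q[of 2] by simp
  have conv: "Kr n k i = (-1) ^ i * Kr n m i" if "i \<le> n" for i
    using Kr_SK[OF mle that] km by simp
  have k1: "Kr n k 1 = - Kr n m 1" using conv[of 1] assms by simp
  have ek: "(-1::int) ^ k = 1" using assms(1) by simp
  show ?thesis
  proof (cases "j = 0")
    case True
    then show ?thesis using Kr_0[of n k] k1 pos by simp
  next
    case False
    show ?thesis
    proof (cases "j = n")
      case True
      have "Kr n k (n - 0) = (-1) ^ k * Kr n k 0" by (rule Kr_SJ) simp
      then show ?thesis using True Kr_0[of n k] k1 pos ek assms by simp
    next
      case False
      show ?thesis
      proof (cases "j = 1")
        case True then show ?thesis by simp
      next
        case False
        show ?thesis
        proof (cases "j = n - 1")
          case True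
          have "Kr n k (n - 1) = (-1) ^ k * Kr n k 1" by (rule Kr_SJ) (use assms in simp)
          then show ?thesis using True ek by simp
        next
          case False
          have "2 \<le> j" "j \<le> n - 2" using \<open>j \<noteq> 0\<close> \<open>j \<noteq> 1\<close> \<open>j \<noteq> n\<close> False assms by auto
          then have "\<bar>Kr n m j\<bar> < Kr n m 1" by (rule Q)
          moreover have "\<bar>Kr n k j\<bar> = \<bar>Kr n m j\<bar>" using conv[OF assms(4)] by (simp add: abs_mult)
          ultimately show ?thesis using k1 by (smt (verit) abs_ge_minus_self)
        qed
      qed
    qed
  qed
qed



lemma chi3:
  assumes "x \<in> L n" "y \<in> L n" "z \<in> L n"
  shows "(\<Sum>s\<in>L n. chi s z * chi s x * chi s y) = (if z = bxor x y then 2 ^ n else 0)"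
proof -
  have "(\<Sum>s\<in>L n. chi s z * chi s x * chi s y) = (\<Sum>s\<in>L n. chi s (bxor z (bxor x y)))"
  proof (rule sum.cong)
    fix s assume s: "s \<in> L n"
    have "chi s x * chi s y = chi s (bxor x y)" using assms s by (intro chi_mult) (auto simp: L_def)
    moreover have "chi s z * chi s (bxor x y) = chi s (bxor z (bxor x y))" using assms s by (intro chi_mult) (auto simp: L_def)
    ultimately show "chi s z * chi s x * chi s y = chi s (bxor z (bxor x y))" by (simp add: mult.assoc)
  qed simp
  also have "\<dots> = (if bxor z (bxor x y) = replicate n False then 2 ^ n else 0)"
    by (rule orth) (use assms in \<open>auto simp: L_def\<close>)
  also have "(bxor z (bxor x y) = replicate n False) = (z = bxor x y)"
    using bxor_zero_iff[of z "bxor x y"] assms by (auto simp: L_def)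
  finally show ?thesis .
qed

lemma fourier:
  "(\<Sum>x\<in>L n. \<Sum>y\<in>L n. F x * F y * h (bxor x y)) =
   (\<Sum>s\<in>L n. (\<Sum>z\<in>L n. chi s z * h z) * (\<Sum>x\<in>L n. chi s x * F x) ^ 2) / 2 ^ n"
proof -
  let ?T = "\<lambda>s z x y. (chi s z * h z) * (chi s x * F x) * (chi s y * F y)"
  have A: "F x * F y * h (bxor x y) = (\<Sum>s\<in>L n. \<Sum>z\<in>L n. ?T s z x y) / 2 ^ n"
    if xy: "x \<in> L n" "y \<in> L n" for x y
  proof -
    have "(\<Sum>s\<in>L n. \<Sum>z\<in>L n. ?T s z x y) = (\<Sum>z\<in>L n. \<Sum>s\<in>L n. ?T s z x y)"
      by (rule sum.swap)
    also have "\<dots> = (\<Sum>z\<in>L n. (h z * F x * F y) * (\<Sum>s\<in>L n. chi s z * chi s x * chi s y))"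
      by (simp add: sum_distrib_left algebra_simps)
    also have "\<dots> = (\<Sum>z\<in>L n. if z = bxor x y then (h z * F x * F y) * 2 ^ n else 0)"
      by (rule sum.cong) (use xy chi3 in auto)
    also have "\<dots> = h (bxor x y) * F x * F y * 2 ^ n"
      using xy finite_L by (simp add: L_def)
    finally show ?thesis by simp
  qed
  have "(\<Sum>x\<in>L n. \<Sum>y\<in>L n. F x * F y * h (bxor x y)) =
        (\<Sum>x\<in>L n. \<Sum>y\<in>L n. \<Sum>s\<in>L n. \<Sum>z\<in>L n. ?T s z x y) / 2 ^ n"
    by (simp add: A sum_divide_distrib)
  also have "(\<Sum>x\<in>L n. \<Sum>y\<in>L n. \<Sum>s\<in>L n. \<Sum>z\<in>L n. ?T s z x y) =
             (\<Sum>x\<in>L n. \<Sum>s\<in>L n. \<Sum>y\<in>L n. \<Sum>z\<in>L n. ?T s z x y)"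
    by (rule sum.cong[OF refl], rule sum.swap)
  also have "\<dots> = (\<Sum>s\<in>L n. \<Sum>x\<in>L n. \<Sum>y\<in>L n. \<Sum>z\<in>L n. ?T s z x y)"
    by (rule sum.swap)
  also have "\<dots> = (\<Sum>s\<in>L n. (\<Sum>z\<in>L n. chi s z * h z) * (\<Sum>x\<in>L n. chi s x * F x) ^ 2)"
    by (simp add: power2_eq_square sum_product sum_distrib_left mult_ac)
  finally show ?thesis .
qed



lemma chi_zero: "chi s (replicate m False) = 1"
  by (induction s arbitrary: m) (auto simp: replicate.simps split: nat.splits, case_tac m, auto)

lemma inversion:
  assumes "y \<in> L n"
  shows "(\<Sum>s\<in>L n. chi s y * (\<Sum>y'\<in>L n. chi s y' * g y')) = 2 ^ n * g y"
proof -
  have "(\<Sum>s\<in>L n. chi s y * (\<Sum>y'\<in>L n. chi s y' * g y')) = (\<Sum>s\<in>L n. \<Sum>y'\<in>L n. g y' * (chi s (replicate n False) * chi s y * chi s y'))"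
    by (simp add: chi_zero sum_distrib_left algebra_simps)
  also have "\<dots> = (\<Sum>y'\<in>L n. \<Sum>s\<in>L n. g y' * (chi s (replicate n False) * chi s y * chi s y'))"
    by (rule sum.swap)
  also have "\<dots> = (\<Sum>y'\<in>L n. g y' * (\<Sum>s\<in>L n. chi s (replicate n False) * chi s y * chi s y'))"
    by (simp add: sum_distrib_left)
  also have "\<dots> = (\<Sum>y'\<in>L n. if y' = y then g y' * 2 ^ n else 0)"
  proof (rule sum.cong)
    fix y' assume y': "y' \<in> L n"
    have z: "replicate n False \<in> L n" by (simp add: L_def)
    have "(replicate n False = bxor y y') = (y' = y)"
      using bxor_zero_iff[of y y'] assms y' by (auto simp: L_def)
    then show "g y' * (\<Sum>s\<in>L n. chi s (replicate n False) * chi s y * chi s y') = (if y' = y then g y' * 2 ^ n else 0)"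
      using chi3[OF assms y' z] by auto
  qed simp
  also have "\<dots> = 2 ^ n * g y" using assms finite_L by simp
  finally show ?thesis .
qed

definition sg :: "bool \<Rightarrow> real" where "sg b = (if b then -1 else 1)"

lemma sg_sq: "sg a * sg a = 1" by (simp add: sg_def)
lemma sg_xor: "sg (a \<noteq> b) = sg a * sg b" by (simp add: sg_def)

lemma chi_prod: "length s = length y \<Longrightarrow> chi s y = (\<Prod>l<length s. if s ! l \<and> y ! l then -1 else 1)"
proof (induction s y rule: list_induct2)
  case Nil then show ?case by simp
next
  case (Cons a s b y)
  have "chi (a # s) (b # y) = (if a \<and> b then -1 else 1) * chi s y" by simp
  also have "\<dots> = (\<Prod>l<Suc (length s). if (a # s) ! l \<and> (b # y) ! l then -1 else 1)"
    unfolding prod.lessThan_Suc_shift using Cons by simp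
  finally show ?case by simp
qed

lemma weight_card: "weight x = card {i. i < length x \<and> x ! i}"
  by (simp add: weight_def length_filter_conv_card)

definition idx :: "bool list \<Rightarrow> nat" where "idx T = (LEAST i. T ! i)"

lemma idx_props:
  assumes "weight T = 1"
  shows "idx T < length T" "T ! idx T" "\<And>l. l < length T \<Longrightarrow> T ! l \<Longrightarrow> l = idx T"
proof -
  have "card {i. i < length T \<and> T ! i} = 1" using assms weight_card by simp
  then obtain i0 where i0: "{i. i < length T \<and> T ! i} = {i0}" by (rule card_1_singletonE)
  then have h: "i0 < length T" "T ! i0" "\<And>l. l < length T \<Longrightarrow> T ! l \<Longrightarrow> l = i0" by auto
  have "idx T = i0" unfolding idx_def
  proof (rule Least_equality)
    show "T ! i0" by (rule h(2))
    fix y assume "T ! y"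
    show "i0 \<le> y"
    proof (rule ccontr)
      assume "\<not> i0 \<le> y"
      then have "y < length T" using h(1) by simp
      then show False using h(3) \<open>T ! y\<close> \<open>\<not> i0 \<le> y\<close> by auto
    qed
  qed
  then show "idx T < length T" "T ! idx T" using h(1,2) by simp_all
  show "\<And>l. l < length T \<Longrightarrow> T ! l \<Longrightarrow> l = idx T" using h(3) \<open>idx T = i0\<close> by metis
qed

lemma chi_weight1:
  assumes "weight T = 1" "length y = length T"
  shows "chi T y = sg (y ! idx T)"
proof -
  have "chi T y = (\<Prod>l<length T. if T ! l \<and> y ! l then -1 else 1)" using chi_prod assms by simp
  also have "\<dots> = (\<Prod>l<length T. if l = idx T then sg (y ! l) else 1)"
  proof (rule prod.cong)
    fix l assume l: "l \<in> {..<length T}"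
    show "(if T ! l \<and> y ! l then -1 else 1) = (if l = idx T then sg (y ! l) else 1)"
    proof (cases "l = idx T")
      case True then show ?thesis using idx_props(2)[OF assms(1)] by (simp add: sg_def)
    next
      case False
      then have "\<not> T ! l" using idx_props(3)[OF assms(1), of l] l by auto
      then show ?thesis using False by simp
    qed
  qed simp
  also have "\<dots> = sg (y ! idx T)" using idx_props(1)[OF assms(1)] by simp
  finally show ?thesis .
qed

lemma nth_bxor: "i < length x \<Longrightarrow> i < length y \<Longrightarrow> bxor x y ! i = (x ! i \<noteq> y ! i)"
  by (simp add: bxor_def)

lemma sgsum: "length x = length y \<Longrightarrow> (\<Sum>i<length x. sg (x ! i) * sg (y ! i)) = real (length x) - 2 * real (weight (bxor x y))"
proof (induction x y rule: list_induct2)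
  case Nil then show ?case by simp
next
  case (Cons a x b y)
  have "(\<Sum>i<length (a # x). sg ((a # x) ! i) * sg ((b # y) ! i)) = sg a * sg b + (\<Sum>i<length x. sg (x ! i) * sg (y ! i))"
    unfolding length_Cons sum.lessThan_Suc_shift by simp
  then show ?case using Cons by (simp add: sg_def)
qed

lemma weight_mapA: "A \<subseteq> {..<n} \<Longrightarrow> weight (map (\<lambda>l. l \<in> A) [0..<n]) = card A"
proof -
  assume A: "A \<subseteq> {..<n}"
  have "weight (map (\<lambda>l. l \<in> A) [0..<n]) = card {i. i < n \<and> map (\<lambda>l. l \<in> A) [0..<n] ! i}" by (simp add: weight_card)
  also have "{i. i < n \<and> map (\<lambda>l. l \<in> A) [0..<n] ! i} = A" using A by auto
  finally show ?thesis .
qed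



lemma sum_sgA:
  fixes n :: nat and b :: "nat \<Rightarrow> real"
  assumes "A \<subseteq> {..<n}"
  shows "(\<Sum>i<n. b i * sg (i \<in> A)) = (\<Sum>i<n. b i) - 2 * (\<Sum>i\<in>A. b i)"
proof -
  have "(\<Sum>i<n. b i * sg (i \<in> A)) = (\<Sum>i<n. b i - 2 * (if i \<in> A then b i else 0))"
    by (rule sum.cong) (auto simp: sg_def)
  also have "\<dots> = (\<Sum>i<n. b i) - 2 * (\<Sum>i<n. if i \<in> A then b i else 0)"
    by (simp add: sum_subtractf sum_distrib_left)
  also have "(\<Sum>i<n. if i \<in> A then b i else 0) = (\<Sum>i\<in>{..<n} \<inter> A. b i)"
    using sum.inter_restrict[of "{..<n}" b A] by simp
  also have "{..<n} \<inter> A = A" using assms by auto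
  finally show ?thesis .
qed

lemma H_verts_L: "H_verts n \<subseteq> L n" by (auto simp: H_verts_def L_def)

lemma b_arg:
  fixes n k :: nat and G :: "bool list \<Rightarrow> real" and a :: "nat \<Rightarrow> real" and x :: "bool list"
  assumes nk: "even k" "1 \<le> k" "k \<le> n - 1"
    and x: "x \<in> H_verts n"
    and form: "\<forall>y\<in>H_verts n. G y = (\<Sum>i<n. a i * sg (y ! i))"
    and diag: "G x = 1"
    and edge: "\<forall>y\<in>H_verts n. H_adj k x y \<longrightarrow> G y = (real n - 2 * real k) / real n"
  shows "\<forall>y\<in>H_verts n. G y = (real n - 2 * real (weight (bxor x y))) / real n"
proof -
  define \<gamma> where "\<gamma> = (real n - 2 * real k) / real n"
  define b where "b i = a i * sg (x ! i)" for i
  have lx: "length x = n" using x by (simp add: H_verts_def)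
  have ex: "even (weight x)" using x by (simp add: H_verts_def)
  have ab: "a i = b i * sg (x ! i)" for i by (simp add: b_def mult.assoc sg_sq)
  have sum1: "(\<Sum>i<n. b i) = 1" using form x diag by (simp add: b_def)
  have setA: "(\<Sum>i\<in>A. b i) = (1 - \<gamma>) / 2" if A: "A \<subseteq> {..<n}" "card A = k" for A
  proof -
    define z where "z = map (\<lambda>l. l \<in> A) [0..<n]"
    have lz: "length z = n" by (simp add: z_def)
    have wz: "weight z = k" using weight_mapA[OF A(1)] A(2) by (simp add: z_def)
    define y where "y = bxor x z"
    have ly: "length y = n" using lx lz by (simp add: y_def)
    have yE: "y \<in> H_verts n" using ly even_weight_bxor[of x z] lx lz ex wz nk(1) by (simp add: H_verts_def y_def)
    have "bxor x y = z" using bxor_cancel[of x z] lx lz by (simp add: y_def)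
    then have "H_adj k x y" using wz by (simp add: H_adj_def)
    then have "G y = \<gamma>" using edge yE by (simp add: \<gamma>_def)
    moreover have "G y = (\<Sum>i<n. b i * sg (i \<in> A))"
    proof -
      have "G y = (\<Sum>i<n. a i * sg (y ! i))" using form yE by simp
      also have "\<dots> = (\<Sum>i<n. b i * sg (i \<in> A))"
      proof (rule sum.cong)
        fix i assume i: "i \<in> {..<n}"
        have "y ! i = (x ! i \<noteq> (i \<in> A))" using i lx lz by (simp add: y_def nth_bxor z_def)
        then have "sg (y ! i) = sg (x ! i) * sg (i \<in> A)" by (simp only: sg_xor)
        then show "a i * sg (y ! i) = b i * sg (i \<in> A)"
          by (simp add: b_def mult.assoc)
      qed simp
      finally show ?thesis .
    qed
    ultimately show ?thesis using sum_sgA[OF A(1), of b] sum1 by simp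
  qed
  have beq: "b i = b j" if ij: "i < n" "j < n" "i \<noteq> j" for i j
  proof -
    have "k - 1 \<le> card ({..<n} - {i, j})" using ij nk by (simp add: card_Diff_subset)
    then obtain B where B: "B \<subseteq> {..<n} - {i, j}" "card B = k - 1" "finite B"
      by (rule obtain_subset_with_card_n)
    have c1: "card (insert i B) = k" using B nk by (subst card_insert_disjoint) auto
    have c2: "card (insert j B) = k" using B nk by (subst card_insert_disjoint) auto
    have "(\<Sum>l\<in>insert i B. b l) = b i + (\<Sum>l\<in>B. b l)" using B by (subst sum.insert) auto
    moreover have "(\<Sum>l\<in>insert j B. b l) = b j + (\<Sum>l\<in>B. b l)" using B by (subst sum.insert) auto
    moreover have "(\<Sum>l\<in>insert i B. b l) = (1 - \<gamma>) / 2" using setA[OF _ c1] B ij by auto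
    moreover have "(\<Sum>l\<in>insert j B. b l) = (1 - \<gamma>) / 2" using setA[OF _ c2] B ij by auto
    ultimately show ?thesis by simp
  qed
  have n0: "n > 0" using nk by simp
  have ball: "b i = b 0" if "i < n" for i using beq[of i 0] that n0 by (cases "i = 0") auto
  have "(\<Sum>i<n. b i) = (\<Sum>i<n. b 0)" by (rule sum.cong[OF refl]) (use ball in blast)
  then have "(\<Sum>i<n. b i) = real n * b 0" by simp
  then have b0: "b 0 = 1 / real n" using sum1 n0 by (simp add: field_simps)
  have bi: "b i = 1 / real n" if "i < n" for i using ball[OF that] b0 by simp
  show ?thesis
  proof
    fix y assume yE: "y \<in> H_verts n"
    have ly: "length y = n" using yE by (simp add: H_verts_def)
    have "G y = (\<Sum>i<n. a i * sg (y ! i))" using form yE by simp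
    also have "\<dots> = (\<Sum>i<n. (1 / real n) * (sg (x ! i) * sg (y ! i)))"
    proof (rule sum.cong[OF refl])
      fix i assume "i \<in> {..<n}"
      then have "a i = (1 / real n) * sg (x ! i)" using ab bi by simp
      then show "a i * sg (y ! i) = (1 / real n) * (sg (x ! i) * sg (y ! i))" by simp
    qed
    also have "\<dots> = (1 / real n) * (real n - 2 * real (weight (bxor x y)))"
      using sgsum[of x y] lx ly by (simp only: sum_distrib_left[symmetric])
    finally show "G y = (real n - 2 * real (weight (bxor x y))) / real n" by simp
  qed
qed



lemma restrictL:
  assumes "A \<subseteq> L n"
  shows "(\<Sum>x\<in>L n. if x \<in> A then f x else 0) = (\<Sum>x\<in>A. f x)"
proof -
  have "(\<Sum>x\<in>L n. if x \<in> A then f x else 0) = (\<Sum>x\<in>L n \<inter> A. f x)"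
    using sum.inter_restrict[of "L n" f A] finite_L by simp
  also have "L n \<inter> A = A" using assms by auto
  finally show ?thesis .
qed

lemma edge_fourier:
  fixes n k' d :: nat and p :: "bool list \<Rightarrow> nat \<Rightarrow> real"
  shows "(\<Sum>x\<in>H_verts n. \<Sum>y\<in>H_verts n. if H_adj k' x y then inner_d d (p x) (p y) else 0)
         = (\<Sum>s\<in>L n. KS s k' * (\<Sum>r<d. (\<Sum>x\<in>L n. chi s x * (if x \<in> H_verts n then p x r else 0)) ^ 2)) / 2 ^ n"
proof -
  define F where "F r x = (if x \<in> H_verts n then p x r else 0)" for r x
  define h where "h z = (if weight z = k' then 1 else 0 :: real)" for z
  let ?E = "H_verts n"
  have "(\<Sum>x\<in>?E. \<Sum>y\<in>?E. if H_adj k' x y then inner_d d (p x) (p y) else 0)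
      = (\<Sum>x\<in>L n. if x \<in> ?E then (\<Sum>y\<in>L n. if y \<in> ?E then (if H_adj k' x y then inner_d d (p x) (p y) else 0) else 0) else 0)"
    by (simp add: restrictL H_verts_L)
  also have "\<dots> = (\<Sum>x\<in>L n. \<Sum>y\<in>L n. \<Sum>r<d. F r x * F r y * h (bxor x y))"
  proof (rule sum.cong[OF refl])
    fix x assume "x \<in> L n"
    show "(if x \<in> ?E then (\<Sum>y\<in>L n. if y \<in> ?E then (if H_adj k' x y then inner_d d (p x) (p y) else 0) else 0) else 0)
      = (\<Sum>y\<in>L n. \<Sum>r<d. F r x * F r y * h (bxor x y))"
    proof (cases "x \<in> ?E")
      case True
      then show ?thesis
        by (simp, intro sum.cong refl) (auto simp: F_def h_def H_adj_def inner_d_def sum_distrib_right)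
    next
      case False
      then show ?thesis by (simp add: F_def)
    qed
  qed
  also have "\<dots> = (\<Sum>r<d. \<Sum>x\<in>L n. \<Sum>y\<in>L n. F r x * F r y * h (bxor x y))"
  proof -
    have "(\<Sum>x\<in>L n. \<Sum>y\<in>L n. \<Sum>r<d. F r x * F r y * h (bxor x y)) = (\<Sum>x\<in>L n. \<Sum>r<d. \<Sum>y\<in>L n. F r x * F r y * h (bxor x y))"
      by (rule sum.cong[OF refl], rule sum.swap)
    also have "\<dots> = (\<Sum>r<d. \<Sum>x\<in>L n. \<Sum>y\<in>L n. F r x * F r y * h (bxor x y))"
      by (rule sum.swap)
    finally show ?thesis .
  qed
  also have "\<dots> = (\<Sum>r<d. (\<Sum>s\<in>L n. (\<Sum>z\<in>L n. chi s z * h z) * (\<Sum>x\<in>L n. chi s x * F r x) ^ 2) / 2 ^ n)"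
    by (simp add: fourier)
  also have "\<dots> = (\<Sum>r<d. \<Sum>s\<in>L n. KS s k' * (\<Sum>x\<in>L n. chi s x * F r x) ^ 2) / 2 ^ n"
    by (simp add: sum_divide_distrib[symmetric] KS_def h_def L_def if_distrib cong: if_cong)
  also have "\<dots> = (\<Sum>s\<in>L n. KS s k' * (\<Sum>r<d. (\<Sum>x\<in>L n. chi s x * F r x) ^ 2)) / 2 ^ n"
    by (simp add: sum.swap[of _ "{..<d}"] sum_distrib_left)
  finally show ?thesis by (simp add: F_def)
qed



lemma weight0_iff: "(weight z = 0) = (z = replicate (length z) False)"
  by (induction z) auto

lemma H_adj0: "x \<in> L n \<Longrightarrow> y \<in> L n \<Longrightarrow> H_adj 0 x y = (x = y)"
  using bxor_zero_iff[of x y] by (simp add: H_adj_def weight0_iff L_def)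

lemma bij_bxor: "x \<in> L n \<Longrightarrow> bij_betw (bxor x) (L n) (L n)"
  by (rule bij_betw_byWitness[where f' = "bxor x"]) (auto simp: L_def bxor_cancel)

lemma chi_zero_l: "chi (replicate m False) z = 1"
  by (simp add: chi_comm[of "replicate m False"] chi_zero)

lemma count_edges:
  assumes "even k" "x \<in> H_verts n"
  shows "(\<Sum>y\<in>H_verts n. if H_adj k x y then 1 else 0) = real (n choose k)"
proof -
  have xL: "x \<in> L n" using assms H_verts_L by auto
  have "(\<Sum>y\<in>H_verts n. if H_adj k x y then 1 else 0) = (\<Sum>y\<in>L n. if y \<in> H_verts n then (if H_adj k x y then 1 else 0) else (0::real))"
    by (simp add: restrictL H_verts_L)
  also have "\<dots> = (\<Sum>y\<in>L n. if weight (bxor x y) = k then 1 else 0)"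
  proof (rule sum.cong[OF refl])
    fix y assume y: "y \<in> L n"
    have "weight (bxor x y) = k \<Longrightarrow> y \<in> H_verts n"
      using even_weight_bxor[of x y] assms y by (auto simp: H_verts_def L_def)
    then show "(if y \<in> H_verts n then (if H_adj k x y then 1 else 0) else (0::real)) = (if weight (bxor x y) = k then 1 else 0)"
      by (auto simp: H_adj_def)
  qed
  also have "\<dots> = (\<Sum>z\<in>L n. if weight z = k then 1 else 0)"
    by (rule sum.reindex_bij_betw[OF bij_bxor[OF xL]])
  also have "\<dots> = KS (replicate n False) k"
    unfolding KS_def length_replicate by (rule sum.cong[OF refl]) (simp add: chi_zero_l)
  also have "\<dots> = real (n choose k)" by (simp add: KS_Kr weight_replicate Kr_0)
  finally show ?thesis .
qed

lemma lam_formula: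
  assumes "1 \<le> k" "k \<le> n"
  shows "real n * real_of_int (Kr n k 1) = (real n - 2 * real k) * real (n choose k)"
proof -
  obtain n' k' where nk: "n = Suc n'" "k = Suc k'" using assms by (cases n; cases k) auto
  have "Kr n k 1 = int (n' choose k) - int (n' choose k')" using nk by (simp add: Kr_0)
  moreover have "(n - k) * (n choose k) = n * (n' choose k)" using binomial_absorb_comp[of n k] nk by simp
  moreover have "k * (n choose k) = n * (n' choose k')" using times_binomial_minus1_eq[of k n] nk by simp
  ultimately have h1: "Kr n k 1 = int (n' choose k) - int (n' choose k')"
    and h2: "(n - k) * (n choose k) = n * (n' choose k)" and h3: "k * (n choose k) = n * (n' choose k')" by auto
  have e1: "real_of_int (Kr n k 1) = real (n' choose k) - real (n' choose k')" using h1 by simp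
  have "real ((n - k) * (n choose k)) = real (n * (n' choose k))" using h2 by (simp only:)
  then have e2: "(real n - real k) * real (n choose k) = real n * real (n' choose k)"
    using assms(2) by (simp only: of_nat_mult of_nat_diff)
  have "real (k * (n choose k)) = real (n * (n' choose k'))" using h3 by (simp only:)
  then have e3: "real k * real (n choose k) = real n * real (n' choose k')" by (simp only: of_nat_mult)
  have "real n * real_of_int (Kr n k 1) = real n * real (n' choose k) - real n * real (n' choose k')"
    using e1 by (simp add: right_diff_distrib)
  also have "\<dots> = (real n - real k) * real (n choose k) - real k * real (n choose k)" using e2 e3 by simp
  also have "\<dots> = (real n - 2 * real k) * real (n choose k)" by (simp add: algebra_simps)
  finally show ?thesis .
qed



lemma core:
  fixes n k d :: nat and p :: "bool list \<Rightarrow> nat \<Rightarrow> real" and \<beta> :: real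
  assumes nk: "even k" "n + 2 \<le> 2 * k" "k \<le> n - 1"
    and unit: "\<forall>x\<in>H_verts n. inner_d d (p x) (p x) = 1"
    and adj: "\<forall>x\<in>H_verts n. \<forall>y\<in>H_verts n. H_adj k x y \<longrightarrow> inner_d d (p x) (p y) \<le> \<beta>"
  shows "(real n - 2 * real k) / real n \<le> \<beta> \<and>
    (\<beta> = (real n - 2 * real k) / real n \<longrightarrow>
      (\<forall>x\<in>H_verts n. \<forall>y\<in>H_verts n. inner_d d (p x) (p y) = (real n - 2 * real (weight (bxor x y))) / real n))"
proof -
  let ?E = "H_verts n"
  define \<gamma> where "\<gamma> = (real n - 2 * real k) / real n"
  define F where "F r x = (if x \<in> ?E then p x r else 0)" for r x
  define FH where "FH r s = (\<Sum>x\<in>L n. chi s x * F r x)" for r s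
  define Q where "Q s = (\<Sum>r<d. (FH r s) ^ 2)" for s
  define lam where "lam = real_of_int (Kr n k 1)"
  define C where "C = real (n choose k)"
  define N where "N = real (card ?E)"
  define SE where "SE = (\<Sum>x\<in>?E. \<Sum>y\<in>?E. if H_adj k x y then inner_d d (p x) (p y) else 0)"
  have n0: "n > 0" using nk by simp
  have finE: "finite ?E" using H_verts_L finite_L finite_subset by blast
  have SE_eq: "SE = (\<Sum>s\<in>L n. KS s k * Q s) / 2 ^ n"
    using edge_fourier[where n=n and k'=k and d=d and p=p] by (simp add: SE_def Q_def FH_def F_def)
  have N_eq: "N = (\<Sum>s\<in>L n. Q s) / 2 ^ n"
  proof -
    have "(\<Sum>x\<in>?E. \<Sum>y\<in>?E. if H_adj 0 x y then inner_d d (p x) (p y) else 0) = (\<Sum>x\<in>?E. 1)"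
    proof (rule sum.cong[OF refl])
      fix x assume x: "x \<in> ?E"
      have "(\<Sum>y\<in>?E. if H_adj 0 x y then inner_d d (p x) (p y) else 0) = (\<Sum>y\<in>?E. if x = y then inner_d d (p x) (p y) else 0)"
      proof (rule sum.cong[OF refl])
        fix y assume y: "y \<in> ?E"
        have "H_adj 0 x y = (x = y)" using H_adj0[of x n y] x y H_verts_L by blast
        then show "(if H_adj 0 x y then inner_d d (p x) (p y) else 0) = (if x = y then inner_d d (p x) (p y) else 0)" by simp
      qed
      also have "\<dots> = inner_d d (p x) (p x)" using x finE sum.delta[OF finE, of x "\<lambda>y. inner_d d (p x) (p y)"] by (simp add: eq_commute[of x])
      also have "\<dots> = 1" using x unit by blast
      finally show "(\<Sum>y\<in>?E. if H_adj 0 x y then inner_d d (p x) (p y) else 0) = 1" .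
    qed
    then show ?thesis using edge_fourier[where n=n and k'=0 and d=d and p=p] by (simp add: N_def Q_def FH_def F_def KS_0)
  qed
  have lamC: "lam = \<gamma> * C"
    using lam_formula[of k n] nk n0 by (simp add: lam_def \<gamma>_def C_def field_simps)
  have Npos: "N > 0"
  proof -
    have "replicate n False \<in> ?E" by (simp add: H_verts_def weight_replicate)
    then have "card ?E > 0" using finE card_gt_0_iff by blast
    then show ?thesis by (simp add: N_def)
  qed
  have Cpos: "C > 0" using nk by (simp add: C_def)
  have ecount: "(\<Sum>x\<in>?E. \<Sum>y\<in>?E. if H_adj k x y then 1 else 0) = N * C"
  proof -
    have "(\<Sum>x\<in>?E. \<Sum>y\<in>?E. if H_adj k x y then 1 else 0) = (\<Sum>x\<in>?E. C)"
      by (rule sum.cong[OF refl]) (simp add: count_edges[OF nk(1)] C_def)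
    then show ?thesis by (simp add: N_def)
  qed
  have SE_le: "SE \<le> \<beta> * (N * C)"
  proof -
    have "SE \<le> (\<Sum>x\<in>?E. \<Sum>y\<in>?E. \<beta> * (if H_adj k x y then 1 else 0))"
      unfolding SE_def by (intro sum_mono) (use adj in auto)
    also have "\<dots> = \<beta> * (N * C)" using ecount by (simp add: sum_distrib_left[symmetric])
    finally show ?thesis .
  qed
  have key: "(\<Sum>s\<in>L n. (KS s k - lam) * Q s) = 2 ^ n * (SE - lam * N)"
  proof -
    have a: "(\<Sum>s\<in>L n. KS s k * Q s) = 2 ^ n * SE" using SE_eq by simp
    have b: "(\<Sum>s\<in>L n. Q s) = 2 ^ n * N" using N_eq by simp
    have "(\<Sum>s\<in>L n. (KS s k - lam) * Q s) = (\<Sum>s\<in>L n. KS s k * Q s) - lam * (\<Sum>s\<in>L n. Q s)"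
      by (simp add: left_diff_distrib sum_subtractf sum_distrib_left)
    then show ?thesis using a b by (simp add: algebra_simps)
  qed
  have KSge: "KS s k \<ge> lam" and KSgt: "weight s \<noteq> 1 \<Longrightarrow> weight s \<noteq> n - 1 \<Longrightarrow> KS s k > lam"
    if "s \<in> L n" for s
  proof -
    have w: "weight s \<le> n" using that weight_le[of s] by (simp add: L_def)
    have "KS s k = real_of_int (Kr n k (weight s))" using that by (simp add: KS_Kr L_def)
    then show "KS s k \<ge> lam" "weight s \<noteq> 1 \<Longrightarrow> weight s \<noteq> n - 1 \<Longrightarrow> KS s k > lam"
      using Kr_main[OF nk w] by (simp_all add: lam_def)
  qed
  have Qnn: "Q s \<ge> 0" for s unfolding Q_def by (intro sum_nonneg) simp
  have terms: "\<forall>s\<in>L n. (KS s k - lam) * Q s \<ge> 0" using KSge Qnn by simp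
  have "0 \<le> (\<Sum>s\<in>L n. (KS s k - lam) * Q s)" using terms by (intro sum_nonneg) auto
  then have "0 \<le> 2 ^ n * (SE - lam * N)" using key by simp
  moreover have "(0::real) < 2 ^ n" by simp
  ultimately have SEge: "0 \<le> SE - lam * N" by (simp add: zero_le_mult_iff)
  have ge: "\<gamma> \<le> \<beta>"
  proof -
    have "0 \<le> \<beta> * (N * C) - \<gamma> * C * N" using SEge SE_le lamC by simp
    then have "0 \<le> (N * C) * (\<beta> - \<gamma>)" by (simp add: algebra_simps)
    moreover have "N * C > 0" using Npos Cpos by simp
    ultimately show ?thesis by (simp add: zero_le_mult_iff)
  qed
  have eqpart: "\<forall>x\<in>?E. \<forall>y\<in>?E. inner_d d (p x) (p y) = (real n - 2 * real (weight (bxor x y))) / real n"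
    if beq: "\<beta> = \<gamma>"
  proof -
    have SE0: "SE - lam * N = 0" using SEge SE_le lamC beq by (simp add: algebra_simps)
    then have "(\<Sum>s\<in>L n. (KS s k - lam) * Q s) = 0" using key by simp
    then have t0: "\<forall>s\<in>L n. (KS s k - lam) * Q s = 0" using sum_nonneg_eq_0_iff[OF finite_L[of n], of "\<lambda>s. (KS s k - lam) * Q s"] terms by simp
    have bad: "FH r s = 0" if s: "s \<in> L n" "weight s \<noteq> 1" "weight s \<noteq> n - 1" and r: "r < d" for s r
    proof -
      have "Q s = 0" using t0 s KSgt[OF s] by auto
      then have "\<forall>r\<in>{..<d}. (FH r s) ^ 2 = 0" unfolding Q_def
        by (subst (asm) sum_nonneg_eq_0_iff) auto
      then show ?thesis using r by simp
    qed
    have edgeq: "\<forall>x\<in>?E. \<forall>y\<in>?E. H_adj k x y \<longrightarrow> inner_d d (p x) (p y) = \<gamma>"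
    proof -
      define D where "D x y = (if H_adj k x y then \<gamma> - inner_d d (p x) (p y) else 0)" for x y
      have Dnn: "D x y \<ge> 0" if "x \<in> ?E" "y \<in> ?E" for x y using adj that beq by (simp add: D_def)
      have "(\<Sum>x\<in>?E. \<Sum>y\<in>?E. D x y) = \<gamma> * (N * C) - SE"
      proof -
        have "(\<Sum>x\<in>?E. \<Sum>y\<in>?E. D x y) = (\<Sum>x\<in>?E. \<Sum>y\<in>?E. \<gamma> * (if H_adj k x y then 1 else 0)) - SE"
          unfolding SE_def D_def by (simp add: sum_subtractf[symmetric] if_distrib cong: if_cong)
        then show ?thesis using ecount by (simp add: sum_distrib_left[symmetric])
      qed
      then have "(\<Sum>x\<in>?E. \<Sum>y\<in>?E. D x y) = 0" using SE0 lamC by (simp add: algebra_simps)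
      then have "\<forall>x\<in>?E. (\<Sum>y\<in>?E. D x y) = 0"
        using sum_nonneg_eq_0_iff[OF finE, of "\<lambda>x. \<Sum>y\<in>?E. D x y"] Dnn by (simp add: sum_nonneg)
      then have "\<forall>x\<in>?E. \<forall>y\<in>?E. D x y = 0"
        using sum_nonneg_eq_0_iff[OF finE] Dnn by blast
      then show ?thesis
      proof (intro ballI impI)
        fix x y assume D0: "\<forall>x\<in>?E. \<forall>y\<in>?E. D x y = 0" and xy: "x \<in> ?E" "y \<in> ?E" and a: "H_adj k x y"
        then have "D x y = 0" by blast
        then show "inner_d d (p x) (p y) = \<gamma>" using a by (simp add: D_def)
      qed
    qed
    show ?thesis
    proof
      fix x assume xE: "x \<in> ?E"
      define g where "g y = (\<Sum>r<d. p x r * F r y)" for y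
      define gh where "gh s = (\<Sum>y\<in>L n. chi s y * g y)" for s
      have g_in: "g y = inner_d d (p x) (p y)" if "y \<in> ?E" for y
        using that by (simp add: g_def F_def inner_d_def)
      have gh_eq: "gh s = (\<Sum>r<d. p x r * FH r s)" for s
      proof -
        have "gh s = (\<Sum>y\<in>L n. \<Sum>r<d. p x r * (chi s y * F r y))"
          by (simp add: gh_def g_def sum_distrib_left mult_ac)
        also have "\<dots> = (\<Sum>r<d. \<Sum>y\<in>L n. p x r * (chi s y * F r y))" by (rule sum.swap)
        also have "\<dots> = (\<Sum>r<d. p x r * FH r s)" by (simp add: FH_def sum_distrib_left)
        finally show ?thesis .
      qed
      have gh0: "gh s = 0" if "s \<in> L n" "weight s \<noteq> 1" "weight s \<noteq> n - 1" for s
        using bad[OF that] by (simp add: gh_eq)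
      define Good where "Good = {s \<in> L n. weight s = 1 \<or> weight s = n - 1}"
      define u where "u s = (if weight s = 1 then s else map Not s)" for s
      have finG: "finite Good" using finite_L by (simp add: Good_def)
      have uprops: "weight (u s) = 1 \<and> length (u s) = n" if "s \<in> Good" for s
      proof -
        have ls: "length s = n" and ws: "weight s = 1 \<or> weight s = n - 1" using that by (auto simp: Good_def L_def)
        have "n - (n - 1) = 1" using n0 by simp
        then show ?thesis using ls ws by (auto simp: u_def weight_not)
      qed
      have chi_u: "chi s y = sg (y ! idx (u s))" if s: "s \<in> Good" and y: "y \<in> ?E" for s y
      proof -
        have ly: "length y = n" "length s = n" using y s by (auto simp: H_verts_def Good_def L_def)
        have ey: "even (weight y)" using y by (simp add: H_verts_def)
        have "chi s y = chi (u s) y" using chi_not[of s y] ly ey by (simp add: u_def)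
        also have "\<dots> = sg (y ! idx (u s))" using chi_weight1[of "u s" y] uprops[OF s] ly by simp
        finally show ?thesis .
      qed
      define a where "a i = (\<Sum>s\<in>{s \<in> Good. idx (u s) = i}. gh s) / 2 ^ n" for i
      have form: "\<forall>y\<in>?E. g y = (\<Sum>i<n. a i * sg (y ! i))"
      proof
        fix y assume yE: "y \<in> ?E"
        have yL: "y \<in> L n" using yE H_verts_L by auto
        have "2 ^ n * g y = (\<Sum>s\<in>L n. chi s y * gh s)"
          using inversion[OF yL, of g] by (simp add: gh_def)
        also have "\<dots> = (\<Sum>s\<in>Good. chi s y * gh s)"
          by (rule sum.mono_neutral_right) (auto simp: finite_L Good_def gh0)
        also have "\<dots> = (\<Sum>s\<in>Good. gh s * sg (y ! idx (u s)))"
          by (rule sum.cong[OF refl]) (simp add: chi_u[OF _ yE])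
        also have "\<dots> = (\<Sum>i<n. \<Sum>s\<in>{s \<in> Good. idx (u s) = i}. gh s * sg (y ! idx (u s)))"
          by (rule sum.group[symmetric]) (use finG uprops idx_props in auto)
        also have "\<dots> = (\<Sum>i<n. 2 ^ n * (a i * sg (y ! i)))"
          by (rule sum.cong[OF refl]) (simp add: a_def sum_distrib_right)
        finally show "g y = (\<Sum>i<n. a i * sg (y ! i))" by (simp add: sum_distrib_left[symmetric])
      qed
      have diag: "g x = 1" using g_in[OF xE] unit xE by simp
      have edge: "\<forall>y\<in>?E. H_adj k x y \<longrightarrow> g y = (real n - 2 * real k) / real n"
        using edgeq xE g_in by (simp add: \<gamma>_def)
      have k1: "1 \<le> k" using nk by simp
      have res: "\<forall>y\<in>?E. g y = (real n - 2 * real (weight (bxor x y))) / real n"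
        by (rule b_arg[OF nk(1) k1 nk(3) xE form diag edge])
      show "\<forall>y\<in>?E. inner_d d (p x) (p y) = (real n - 2 * real (weight (bxor x y))) / real n"
        using res g_in by simp
    qed
  qed
  show ?thesis using ge eqpart by (simp add: \<gamma>_def)
qed



lemma ideal_inner:
  assumes "x \<in> H_verts n" "y \<in> H_verts n"
  shows "inner_d n (\<lambda>r. sg (x ! r) / sqrt (real n)) (\<lambda>r. sg (y ! r) / sqrt (real n))
         = (real n - 2 * real (weight (bxor x y))) / real n"
proof -
  have lx: "length x = n" "length y = n" using assms by (auto simp: H_verts_def)
  have "inner_d n (\<lambda>r. sg (x ! r) / sqrt (real n)) (\<lambda>r. sg (y ! r) / sqrt (real n))
        = (\<Sum>r<n. sg (x ! r) * sg (y ! r) / (sqrt (real n) * sqrt (real n)))"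
    unfolding inner_d_def by (rule sum.cong) simp_all
  also have "\<dots> = (\<Sum>r<n. sg (x ! r) * sg (y ! r)) / real n"
    by (simp add: sum_divide_distrib)
  also have "\<dots> = (real n - 2 * real (weight (bxor x y))) / real n"
    using sgsum[of x y] lx by simp
  finally show ?thesis .
qed

lemma weight_bxor_self: "weight (bxor x x) = 0"
  by (induction x) auto

theorem theorem3p9:
  fixes n k :: nat
  assumes "n \<ge> 1" and "even k"
    and "real n / 2 + 1 \<le> real k" and "k \<le> n - 1"
  shows "uniquely_vector_colorable (H_verts n) (H_adj k)"
proof -
  have nk2: "n + 2 \<le> 2 * k" using assms(3) by linarith
  note nk = assms(2) nk2 assms(4)
  let ?E = "H_verts n" and ?A = "H_adj k"
  define t0 :: real where "t0 = 2 * real k / (2 * real k - real n)"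
  define \<gamma> :: real where "\<gamma> = (real n - 2 * real k) / real n"
  have Dpos: "2 * real k - real n > 0" using nk2 by linarith
  have n0: "real n > 0" using assms(1) by simp
  have t0m1: "t0 - 1 = real n / (2 * real k - real n)"
    using Dpos by (simp add: t0_def field_simps)
  have t0ge: "t0 \<ge> 2"
  proof -
    have "k \<le> n" using assms(4) by simp
    then have "real k \<le> real n" by simp
    then have "2 * (2 * real k - real n) \<le> 2 * real k" by (simp add: algebra_simps)
    then show ?thesis using Dpos by (simp add: t0_def field_simps)
  qed
  have bt0: "- 1 / (t0 - 1) = \<gamma>"
    using Dpos n0 by (simp add: t0m1 \<gamma>_def field_simps)
  define T where "T = {t. \<exists>d p. vector_coloring ?E ?A t d p}"
  have t0T: "t0 \<in> T"
  proof -
    define p0 :: "bool list \<Rightarrow> nat \<Rightarrow> real" where "p0 = (\<lambda>x r. sg (x ! r) / sqrt (real n))"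
    have "vector_coloring ?E ?A t0 n p0"
      unfolding vector_coloring_def
    proof (intro conjI ballI impI)
      show "2 \<le> t0" by (rule t0ge)
    next
      fix x assume "x \<in> ?E"
      then show "inner_d n (p0 x) (p0 x) = 1"
        using ideal_inner[of x n x] n0 by (simp add: p0_def weight_bxor_self)
    next
      fix x y assume xy: "x \<in> ?E" "y \<in> ?E" and a: "?A x y"
      have "inner_d n (p0 x) (p0 y) = \<gamma>"
        using ideal_inner[OF xy] a by (simp add: p0_def H_adj_def \<gamma>_def)
      then show "inner_d n (p0 x) (p0 y) \<le> - 1 / (t0 - 1)" using bt0 by simp
    qed
    then show ?thesis by (auto simp: T_def)
  qed
  have lower: "t0 \<le> t" if "t \<in> T" for t
  proof -
    from that obtain d p where vc: "vector_coloring ?E ?A t d p" unfolding T_def by blast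
    then have t2: "t \<ge> 2" and unit: "\<forall>x\<in>?E. inner_d d (p x) (p x) = 1"
      and adj: "\<forall>x\<in>?E. \<forall>y\<in>?E. ?A x y \<longrightarrow> inner_d d (p x) (p y) \<le> - 1 / (t - 1)"
      by (auto simp: vector_coloring_def)
    have "\<gamma> \<le> - 1 / (t - 1)" using core[OF nk unit adj] by (simp add: \<gamma>_def)
    then have "1 / (t - 1) \<le> (2 * real k - real n) / real n" using n0 by (simp add: \<gamma>_def field_simps)
    then have "real n \<le> (2 * real k - real n) * (t - 1)" using t2 n0 by (simp add: field_simps)
    then have "real n / (2 * real k - real n) \<le> t - 1" using Dpos by (simp add: field_simps)
    then show ?thesis using t0m1 by simp
  qed
  have chi: "vector_chromatic_number ?E ?A = t0"
    unfolding vector_chromatic_number_def T_def[symmetric]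
    by (rule cInf_eq_minimum[OF t0T lower])
  have formula: "\<forall>x\<in>?E. \<forall>y\<in>?E. inner_d d (p x) (p y) = (real n - 2 * real (weight (bxor x y))) / real n"
    if "optimal_vector_coloring ?E ?A d p" for d p
  proof -
    have vc: "vector_coloring ?E ?A t0 d p" using that chi by (simp add: optimal_vector_coloring_def)
    then have unit: "\<forall>x\<in>?E. inner_d d (p x) (p x) = 1"
      and adj: "\<forall>x\<in>?E. \<forall>y\<in>?E. ?A x y \<longrightarrow> inner_d d (p x) (p y) \<le> - 1 / (t0 - 1)"
      by (auto simp: vector_coloring_def)
    show ?thesis using core[OF nk unit adj] bt0 by (simp add: \<gamma>_def)
  qed
  show ?thesis
    unfolding uniquely_vector_colorable_def
  proof (intro allI impI ballI)
    fix d p d' q i j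
    assume op: "optimal_vector_coloring ?E ?A d p" and oq: "optimal_vector_coloring ?E ?A d' q"
      and ij: "i \<in> ?E" "j \<in> ?E"
    show "inner_d d (p i) (p j) = inner_d d' (q i) (q j)"
      using formula[OF op] formula[OF oq] ij by simp
  qed
qed

end
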